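(* Let $\delta$ be a non-null classifier and $t\ge0$. For each $\beta\in\{0,1\}$, the maximizer of the conditional payoff $V_\beta(r)$ over $r\in\mathbb{R}$ is $r^*_\beta=k^*_\beta(t,F)/\rho(\delta,\phi)$, where $k_0^*=k_0^*(t,F)$ and $k_1^*=k_1^*(t,F)$ are defined implicitly by $k_0^*=t-\frac{F(k_0^* )}{f(k_0^* )}$ and $k_1^*=t+\frac{1-F(k_1^* )}{f(k_1^* )}$. In particular these two values do not depend on the individual's cost $\gamma_i$.
   Context: Individuals have privately known costs $\gamma_i\in\mathbb{R}$ of choosing $\beta_i=1$ (compliance) rather than $\beta_i=0$, distributed according to a continuously differentiable CDF $F$ with log-concave density $f$ of full support on $\mathbb{R}$. A classifier $\delta=(\delta_1,\delta_0)\in[0,1]^2$ assigns $d_i\in\{0,1\}$ with $\Pr[d_i=s_i\mid s_i]=\delta_{s_i}$, where $\Pr[s_i=\beta_i]=\phi\in(\tfrac12,1]$. Let $\rho=\rho(\delta,\phi)=(\delta_1+\delta_0-1)(2\phi-1)$; $\delta$ is non-null if $\rho\ne0$. Individuals with $d_i=1$ receive reward $r$, financed by an equal tax on everyone (budget balance), and each gets $t\cdot\pi$ where $\pi=F(r\rho)$ is the compliance rate (individuals comply iff $\gamma_i\le r\rho$). Conditional payoffs: $V_1(r)=-\gamma_i+r\rho(1-F(r\rho))+tF(r\rho)$ (complying) and $V_0(r)=-r\rho F(r\rho)+tF(r\rho)$ (not complying). *)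

theory Defs
  imports "HOL-Analysis.Analysis"
begin

text \<open>Informativeness of a classifier delta = (d1, d0) given signal accuracy phi.\<close>
definition rho :: "real \<Rightarrow> real \<Rightarrow> real \<Rightarrow> real" where
  "rho d1 d0 phi = (d1 + d0 - 1) * (2 * phi - 1)"

text \<open>Conditional payoff when complying (cost gamma), as function of reward r.\<close>
definition V1 :: "(real \<Rightarrow> real) \<Rightarrow> real \<Rightarrow> real \<Rightarrow> real \<Rightarrow> real \<Rightarrow> real" where
  "V1 F rh t gamma r = - gamma + r * rh * (1 - F (r * rh)) + t * F (r * rh)"

text \<open>Conditional payoff when not complying, as function of reward r.\<close>
definition V0 :: "(real \<Rightarrow> real) \<Rightarrow> real \<Rightarrow> real \<Rightarrow> real \<Rightarrow> real" where
  "V0 F rh t r = - r * rh * F (r * rh) + t * F (r * rh)"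

definition log_concave :: "(real \<Rightarrow> real) \<Rightarrow> bool" where
  "log_concave f \<longleftrightarrow> (\<forall>x. f x > 0) \<and> concave_on UNIV (\<lambda>x. ln (f x))"

end

theory Submission
  imports Defs "HOL-Real_Asymp.Real_Asymp"
begin

lemma lc_ineq:
  fixes f :: "real \<Rightarrow> real"
  assumes lc: "log_concave f" and xy: "x \<le> y" and s: "0 \<le> s"
  shows "f (x - s) * f y \<le> f (y - s) * f x"
proof (cases "s = 0 \<or> x = y")
  case True then show ?thesis by (auto simp: mult.commute)
next
  case False
  hence s0: "s > 0" and xy': "x < y" using s xy by auto
  have pos: "\<And>z. f z > 0" using lc by (simp add: log_concave_def)
  have cc: "concave_on UNIV (\<lambda>x. ln (f x))" using lc by (simp add: log_concave_def)
  define l where "l = s / (y - x + s)"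
  have l0: "0 \<le> l" "l \<le> 1" using s0 xy' by (auto simp: l_def field_simps)
  have ls: "l * (y - x + s) = s" using s0 xy' by (simp add: l_def)
  have e1: "x = (1 - l) * (x - s) + l * y" using ls by (simp add: algebra_simps)
  have e2: "y - s = l * (x - s) + (1 - l) * y" using ls by (simp add: algebra_simps)
  have c: "\<And>a b u v. u \<ge> 0 \<Longrightarrow> v \<ge> 0 \<Longrightarrow> u + v = 1 \<Longrightarrow>
      ln (f (u * a + v * b)) \<ge> u * ln (f a) + v * ln (f b)"
    using cc unfolding concave_on_iff by auto
  have "ln (f x) \<ge> (1 - l) * ln (f (x - s)) + l * ln (f y)"
    using c[of "1 - l" l "x - s" y] l0 e1 by simp
  moreover have "ln (f (y - s)) \<ge> l * ln (f (x - s)) + (1 - l) * ln (f y)"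
    using c[of l "1 - l" "x - s" y] l0 e2 by simp
  moreover have "(1 - l) * ln (f (x - s)) + l * ln (f y) + (l * ln (f (x - s)) + (1 - l) * ln (f y))
     = ln (f (x - s)) + ln (f y)" by (simp add: algebra_simps)
  ultimately have "ln (f (x - s)) + ln (f y) \<le> ln (f (y - s)) + ln (f x)" by linarith
  hence "ln (f (x - s) * f y) \<le> ln (f (y - s) * f x)" using pos[of "x-s"] pos[of y] pos[of "y-s"] pos[of x] by (simp add: ln_mult)
  thus ?thesis using pos by (simp add: ln_le_cancel_iff)
qed

lemma F_over_f_mono:
  fixes F f :: "real \<Rightarrow> real"
  assumes F_deriv: "\<And>x. (F has_real_derivative f x) (at x)"
    and F_bot: "(F \<longlongrightarrow> 0) at_bot"
    and lc: "log_concave f" and xy: "x \<le> y"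
  shows "F x / f x \<le> F y / f y"
proof -
  have pos: "\<And>z. f z > 0" using lc by (simp add: log_concave_def)
  define c where "c = f y / f x"
  define d where "d = y - x"
  have d0: "d \<ge> 0" using xy by (simp add: d_def)
  define K where "K u = F u - c * F (u - d)" for u
  have Kd: "(K has_real_derivative (f u - c * f (u - d))) (at u)" for u
  proof -
    have "((\<lambda>x. F (x - d)) has_real_derivative f (u - d) * 1) (at u)"
      by (rule DERIV_chain2[OF F_deriv]) (auto intro!: derivative_eq_intros)
    thus ?thesis unfolding K_def by (auto intro!: derivative_eq_intros F_deriv)
  qed
  have Kd_nn: "f u - c * f (u - d) \<ge> 0" if "u \<le> y" for u
  proof -
    have "f (x - (y - u)) * f y \<le> f (y - (y - u)) * f x"
      using lc_ineq[OF lc xy, of "y - u"] that by simp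
    hence "f (u - d) * f y \<le> f u * f x" by (simp add: d_def algebra_simps)
    thus ?thesis using pos[of x] by (simp add: c_def field_simps)
  qed
  have Kle: "K u \<le> K y" if "u \<le> y" for u
  proof (cases "u = y")
    case False
    hence "u < y" using that by simp
    from MVT2[OF this, of K "\<lambda>u. f u - c * f (u - d)"] Kd
    obtain z where "u < z" "z < y" "K y - K u = (y - u) * (f z - c * f (z - d))" by blast
    moreover have "f z - c * f (z - d) \<ge> 0" using Kd_nn \<open>z < y\<close> by simp
    moreover have "(y - u) * (f z - c * f (z - d)) \<ge> 0"
      using calculation \<open>u < y\<close> by (intro mult_nonneg_nonneg) auto
    ultimately show ?thesis by linarith
  qed simp
  have shift: "filterlim (\<lambda>u. u - d) at_bot at_bot"
    by real_asymp
  have "((\<lambda>u. F (u - d)) \<longlongrightarrow> 0) at_bot"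
    using filterlim_compose[OF F_bot shift] by simp
  hence lim: "(K \<longlongrightarrow> 0 - c * 0) at_bot"
    unfolding K_def by (intro tendsto_intros F_bot)
  have "0 \<le> K y"
    using tendsto_le[OF _ tendsto_const lim, of "K y"]
    by (auto simp: eventually_at_bot_linorder intro!: exI[of _ y] Kle)
  hence "c * F x \<le> F y" by (simp add: K_def d_def)
  thus ?thesis using pos[of x] pos[of y] by (simp add: c_def field_simps)
qed


lemma S_over_f_mono:
  fixes F f :: "real \<Rightarrow> real"
  assumes F_deriv: "\<And>x. (F has_real_derivative f x) (at x)"
    and F_top: "(F \<longlongrightarrow> 1) at_top"
    and lc: "log_concave f" and xy: "x \<le> y"
  shows "(1 - F y) / f y \<le> (1 - F x) / f x"
proof -
  have pos: "\<And>z. f z > 0" using lc by (simp add: log_concave_def)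
  define c where "c = f x / f y"
  define d where "d = y - x"
  have d0: "d \<ge> 0" using xy by (simp add: d_def)
  define K where "K u = (1 - F u) - c * (1 - F (u + d))" for u
  have Kd: "(K has_real_derivative (- f u + c * f (u + d))) (at u)" for u
  proof -
    have "((\<lambda>x. F (x + d)) has_real_derivative f (u + d) * 1) (at u)"
      by (rule DERIV_chain2[OF F_deriv]) (auto intro!: derivative_eq_intros)
    thus ?thesis unfolding K_def by (auto intro!: derivative_eq_intros F_deriv)
  qed
  have Kd_np: "- f u + c * f (u + d) \<le> 0" if "x \<le> u" for u
  proof -
    have "f (u - (u - x)) * f (u + d) \<le> f (u + d - (u - x)) * f u"
      using lc_ineq[OF lc, of u "u + d" "u - x"] that d0 by simp
    hence "f x * f (u + d) \<le> f y * f u" by (simp add: d_def algebra_simps)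
    thus ?thesis using pos[of y] by (simp add: c_def field_simps)
  qed
  have Kle: "K u \<le> K x" if "x \<le> u" for u
  proof (cases "u = x")
    case False
    hence "x < u" using that by simp
    from MVT2[OF this, of K "\<lambda>u. - f u + c * f (u + d)"] Kd
    obtain z where "x < z" "z < u" "K u - K x = (u - x) * (- f z + c * f (z + d))" by blast
    moreover have "- f z + c * f (z + d) \<le> 0" using Kd_np \<open>x < z\<close> by simp
    moreover have "(u - x) * (- f z + c * f (z + d)) \<le> 0"
      using calculation \<open>x < u\<close> by (intro mult_nonneg_nonpos) auto
    ultimately show ?thesis by linarith
  qed simp
  have shift: "filterlim (\<lambda>u. u + d) at_top at_top"
    by real_asymp
  have "((\<lambda>u. F (u + d)) \<longlongrightarrow> 1) at_top"
    using filterlim_compose[OF F_top shift] by simp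
  hence lim: "(K \<longlongrightarrow> (1 - 1) - c * (1 - 1)) at_top"
    unfolding K_def by (intro tendsto_intros F_top)
  have "0 \<le> K x"
    using tendsto_le[OF _ tendsto_const lim, of "K x"]
    by (auto simp: eventually_at_top_linorder intro!: exI[of _ x] Kle)
  hence "c * (1 - F y) \<le> 1 - F x" by (simp add: K_def d_def)
  thus ?thesis using pos[of x] pos[of y] by (simp add: c_def field_simps)
qed

lemma strict_max:
  fixes g f h :: "real \<Rightarrow> real"
  assumes gd: "\<And>k. (g has_real_derivative (f k * h k)) (at k)"
    and pos: "\<And>k. f k > 0"
    and hdec: "\<And>a b. a < b \<Longrightarrow> h b < h a"
    and h0: "h k0 = 0" and ne: "k \<noteq> k0"
  shows "g k < g k0"
proof (cases "k < k0")
  case True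
  from MVT2[OF True, of g "\<lambda>k. f k * h k"] gd
  obtain z where "k < z" "z < k0" "g k0 - g k = (k0 - k) * (f z * h z)" by blast
  moreover have "h z > 0" using hdec[OF \<open>z < k0\<close>] h0 by simp
  moreover have "(k0 - k) * (f z * h z) > 0" using calculation True pos[of z] by simp
  ultimately show ?thesis by linarith
next
  case False
  hence lt: "k0 < k" using ne by simp
  from MVT2[OF lt, of g "\<lambda>k. f k * h k"] gd
  obtain z where "k0 < z" "z < k" "g k - g k0 = (k - k0) * (f z * h z)" by blast
  moreover have "h z < 0" using hdec[OF \<open>k0 < z\<close>] h0 by simp
  moreover have "(k - k0) * (f z * h z) < 0" using calculation lt pos[of z]
    by (simp add: mult_pos_neg)
  ultimately show ?thesis by linarith
qed



theorem corollary1: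
  fixes F f :: "real \<Rightarrow> real" and d1 d0 phi t :: real
  assumes F_deriv: "\<And>x. (F has_real_derivative f x) (at x)"
    and f_cont: "continuous_on UNIV f"
    and F_mono: "mono F"
    and F_bot: "(F \<longlongrightarrow> 0) at_bot"
    and F_top: "(F \<longlongrightarrow> 1) at_top"
    and f_pos: "\<And>x. f x > 0"
    and f_logconc: "log_concave f"
    and d1: "d1 \<in> {0..1}" and d0: "d0 \<in> {0..1}"
    and phi: "phi \<in> {1/2<..1}"
    and nonnull: "rho d1 d0 phi \<noteq> 0"
    and t: "t \<ge> 0"
  shows "\<exists>k0 k1.
           (k0 = t - F k0 / f k0) \<and> (\<forall>k. k = t - F k / f k \<longrightarrow> k = k0) \<and>
           (k1 = t + (1 - F k1) / f k1) \<and> (\<forall>k. k = t + (1 - F k) / f k \<longrightarrow> k = k1) \<and>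
           (\<forall>r. r \<noteq> k0 / rho d1 d0 phi \<longrightarrow>
                 V0 F (rho d1 d0 phi) t r < V0 F (rho d1 d0 phi) t (k0 / rho d1 d0 phi)) \<and>
           (\<forall>gamma r. r \<noteq> k1 / rho d1 d0 phi \<longrightarrow>
                 V1 F (rho d1 d0 phi) t gamma r < V1 F (rho d1 d0 phi) t gamma (k1 / rho d1 d0 phi))"
  proof -
  define \<rho> where "\<rho> = rho d1 d0 phi"
  have Fc: "\<And>x. isCont F x" using F_deriv DERIV_isCont by blast
  have contF: "continuous_on S F" for S by (simp add: Fc continuous_at_imp_continuous_on)
  have contf: "continuous_on S f" for S using f_cont continuous_on_subset by blast
  have Finc: "F x < F y" if "x < y" for x y
  proof -
    from MVT2[OF that, of F f] F_deriv obtain z where "F y - F x = (y - x) * f z" by blast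
    moreover have "(y - x) * f z > 0" using that f_pos[of z] by simp
    ultimately show ?thesis by linarith
  qed
  have Fge: "0 \<le> F x" for x
    using tendsto_le[OF _ tendsto_const F_bot, of "F x"]
    by (auto simp: eventually_at_bot_linorder intro!: exI[of _ x] monoD[OF F_mono])
  have Fle: "F x \<le> 1" for x
    using tendsto_le[OF _ F_top tendsto_const, of "F x"]
    by (auto simp: eventually_at_top_linorder intro!: exI[of _ x] monoD[OF F_mono])
  have Fpos: "0 < F x" for x using Finc[of "x - 1" x] Fge[of "x - 1"] by simp
  have Flt: "F x < 1" for x using Finc[of x "x + 1"] Fle[of "x + 1"] by simp
  define h0 where "h0 k = t - k - F k / f k" for k
  define h1 where "h1 k = t - k + (1 - F k) / f k" for k
  have h0dec: "h0 b < h0 a" if "a < b" for a b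
    using F_over_f_mono[OF F_deriv F_bot f_logconc, of a b] that by (simp add: h0_def)
  have h1dec: "h1 b < h1 a" if "a < b" for a b
    using S_over_f_mono[OF F_deriv F_top f_logconc, of a b] that by (simp add: h1_def)
  have h0c: "continuous_on S h0" for S
    unfolding h0_def using f_pos
    by (intro continuous_intros contF contf) (auto simp: less_imp_neq[symmetric])
  have h1c: "continuous_on S h1" for S
    unfolding h1_def using f_pos
    by (intro continuous_intros contF contf) (auto simp: less_imp_neq[symmetric])
  define M where "M = F 0 / f 0"
  define N where "N = (1 - F 0) / f 0"
  have M0: "M \<ge> 0" using Fpos[of 0] f_pos[of 0] by (simp add: M_def)
  have N0: "N \<ge> 0" using Flt[of 0] f_pos[of 0] by (simp add: N_def)
  define a where "a = min 0 (t - M - 1)"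
  have "h0 a \<ge> 0"
  proof -
    have "F a / f a \<le> M" unfolding M_def
      by (rule F_over_f_mono[OF F_deriv F_bot f_logconc]) (simp add: a_def)
    thus ?thesis by (simp add: h0_def a_def)
  qed
  moreover have "h0 t \<le> 0" using Fpos[of t] f_pos[of t] by (simp add: h0_def)
  moreover have "a \<le> t" using M0 by (simp add: a_def)
  ultimately obtain k0 where k0: "h0 k0 = 0"
    using IVT2'[of h0 t 0 a] h0c by blast
  define b where "b = max 0 (t + N + 1)"
  have "h1 b \<le> 0"
  proof -
    have "(1 - F b) / f b \<le> N" unfolding N_def
      by (rule S_over_f_mono[OF F_deriv F_top f_logconc]) (simp add: b_def)
    thus ?thesis by (simp add: h1_def b_def)
  qed
  moreover have "h1 t \<ge> 0" using Flt[of t] f_pos[of t] by (simp add: h1_def)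
  moreover have "t \<le> b" using N0 by (simp add: b_def)
  ultimately obtain k1 where k1: "h1 k1 = 0"
    using IVT2'[of h1 b 0 t] h1c by blast
  have eq0: "(k = t - F k / f k) \<longleftrightarrow> h0 k = 0" for k by (auto simp: h0_def)
  have eq1: "(k = t + (1 - F k) / f k) \<longleftrightarrow> h1 k = 0" for k by (auto simp: h1_def)
  have uniq0: "h0 k = 0 \<Longrightarrow> k = k0" for k
    using h0dec[of k k0] h0dec[of k0 k] k0 by (cases k k0 rule: linorder_cases) auto
  have uniq1: "h1 k = 0 \<Longrightarrow> k = k1" for k
    using h1dec[of k k1] h1dec[of k1 k] k1 by (cases k k1 rule: linorder_cases) auto
  define g0 where "g0 k = (t - k) * F k" for k
  define g1 where "g1 k = k * (1 - F k) + t * F k" for k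
  have g0d: "(g0 has_real_derivative (f k * h0 k)) (at k)" for k
  proof -
    have "(g0 has_real_derivative (- F k + (t - k) * f k)) (at k)"
      unfolding g0_def by (auto intro!: derivative_eq_intros F_deriv)
    moreover have "- F k + (t - k) * f k = f k * h0 k"
      using f_pos[of k] by (simp add: h0_def field_simps)
    ultimately show ?thesis by simp
  qed
  have g1d: "(g1 has_real_derivative (f k * h1 k)) (at k)" for k
  proof -
    have "(g1 has_real_derivative ((1 - F k) - k * f k + t * f k)) (at k)"
      unfolding g1_def by (auto intro!: derivative_eq_intros F_deriv)
    moreover have "(1 - F k) - k * f k + t * f k = f k * h1 k"
      using f_pos[of k] by (simp add: h1_def field_simps)
    ultimately show ?thesis by simp
  qed
  have V0g: "V0 F \<rho> t r = g0 (r * \<rho>)" for r by (simp add: V0_def g0_def algebra_simps)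
  have V1g: "V1 F \<rho> t gamma r = - gamma + g1 (r * \<rho>)" for gamma r
    by (simp add: V1_def g1_def algebra_simps)
  have rne: "r * \<rho> \<noteq> k" if "r \<noteq> k / \<rho>" for r k
    using that nonnull by (auto simp: \<rho>_def field_simps)
  have kk: "k / \<rho> * \<rho> = k" for k using nonnull by (simp add: \<rho>_def)
  show ?thesis
    unfolding \<rho>_def[symmetric]
  proof (rule exI[of _ k0], rule exI[of _ k1], intro conjI allI impI)
    show "k0 = t - F k0 / f k0" using eq0 k0 by blast
    show "k1 = t + (1 - F k1) / f k1" using eq1 k1 by blast
    show "k = k0" if "k = t - F k / f k" for k using that eq0 uniq0 by blast
    show "k = k1" if "k = t + (1 - F k) / f k" for k using that eq1 uniq1 by blast
    show "V0 F \<rho> t r < V0 F \<rho> t (k0 / \<rho>)" if "r \<noteq> k0 / \<rho>" for r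
      unfolding V0g kk using strict_max[OF g0d f_pos h0dec k0 rne[OF that]] .
    show "V1 F \<rho> t gamma r < V1 F \<rho> t gamma (k1 / \<rho>)" if "r \<noteq> k1 / \<rho>" for gamma r
      unfolding V1g kk using strict_max[OF g1d f_pos h1dec k1 rne[OF that]] by simp
  qed
qed

end
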